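(* Let $d\in\mathbb{N}$. For every $r\in\mathcal{R}$, the set $\Pi_r\subset\mathbb{R}^d\times\mathbb{R}^d$ is Lebesgue measurable and has measure $0$. Moreover, for every $x\in\mathbb{R}^d$, the set $\Phi_r(x)=\{y\in\mathbb{R}^d:(x,y)\in\Pi_r\}$ has Lebesgue measure $0$.
   Context: For $t\in\mathbb{R}$, $\|t\|$ is the distance from $t$ to $\mathbb{Z}$. Write $\mathbb{N}=\{1,2,\dots\}$. $\mathcal{R}=\{r\in\mathbb{R}^d: r_i\ge0,\ \sum_i r_i=1\}$. For $r\in\mathcal{R}$ and $x\in\mathbb{R}^d$, $\|x\|_r=(\max_{1\le i\le d}\|x_i\|^{1/r_i})^{1/d}$. $\mathcal{D}$ is the set of all non-increasing $\psi:\mathbb{N}\to\mathbb{R}_{\ge0}$ with $\sum_n\psi(n)^d=\infty$. $W(r,\psi)$ is the set of $(x,y)\in\mathbb{R}^d\times\mathbb{R}^d$ such that $\|nx+y\|_r<\psi(n)$ for infinitely many $n\in\mathbb{N}$, and $\Pi_r=\bigcap_{\psi\in\mathcal{D}}W(r,\psi)$. *)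

theory Defs
  imports "HOL-Analysis.Analysis"
begin

definition dist_Z :: "real \<Rightarrow> real" where
  "dist_Z t = infdist t \<int>"

definition weights :: "(real ^ 'n) set" where
  "weights = {r. (\<forall>i. r $ i \<ge> 0) \<and> (\<Sum>i\<in>UNIV. r $ i) = 1}"

text \<open>Component term dist_Z(x_i)^(1/r_i); for r_i = 0 the exponent is +infinity and,
  since dist_Z(x_i) \<le> 1/2 < 1, the term is 0.\<close>
definition comp_term :: "real \<Rightarrow> real \<Rightarrow> real" where
  "comp_term ri t = (if ri = 0 then 0 else dist_Z t powr (1 / ri))"

definition rnorm :: "real ^ 'n \<Rightarrow> real ^ 'n \<Rightarrow> real" where
  "rnorm r x = (Max (range (\<lambda>i. comp_term (r $ i) (x $ i)))) powr (1 / real CARD('n))"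

definition classD :: "'n itself \<Rightarrow> (nat \<Rightarrow> real) set" where
  "classD _ = {\<psi>. (\<forall>n\<ge>1. \<psi> n \<ge> 0) \<and> (\<forall>m n. 1 \<le> m \<longrightarrow> m \<le> n \<longrightarrow> \<psi> n \<le> \<psi> m)
                 \<and> \<not> summable (\<lambda>n. \<psi> (Suc n) ^ CARD('n))}"

definition W_set :: "real ^ 'n \<Rightarrow> (nat \<Rightarrow> real) \<Rightarrow> ((real ^ 'n) \<times> (real ^ 'n)) set" where
  "W_set r \<psi> = {(x::real^'n, y::real^'n). infinite {n::nat. n \<ge> 1 \<and> rnorm r (real n *\<^sub>R x + y) < \<psi> n}}"

definition Pi_set :: "real ^ 'n \<Rightarrow> ((real ^ 'n) \<times> (real ^ 'n)) set" where
  "Pi_set r = (\<Inter>\<psi>\<in>classD TYPE('n). W_set r \<psi>)"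

definition Phi_set :: "real ^ 'n \<Rightarrow> real ^ 'n \<Rightarrow> (real ^ 'n) set" where
  "Phi_set r x = {y. (x, y) \<in> Pi_set r}"

end

theory Submission
  imports Defs
begin


lemma rnorm_nonneg: "0 \<le> rnorm r z"
  by (simp add: rnorm_def)

lemma step1:
  fixes x y :: "real ^ 'n"
  assumes xy: "(x,y) \<in> Pi_set r" and e: "\<epsilon> > 0"
  shows "\<exists>N. \<forall>n\<ge>N. \<exists>m\<in>{1..n}. rnorm r (real m *\<^sub>R x + y) ^ CARD('n) < \<epsilon> / real n"
proof (rule ccontr)
  define d where "d = CARD('n)"
  have d0: "d > 0" unfolding d_def by simp
  define a where "a m = rnorm r (real m *\<^sub>R x + y)" for m
  have a0: "a m \<ge> 0" for m unfolding a_def by (rule rnorm_nonneg)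
  assume "\<not> ?thesis"
  hence H: "\<forall>N. \<exists>n\<ge>N. \<forall>m\<in>{1..n}. \<epsilon> / real n \<le> a m ^ d"
    unfolding a_def d_def by (auto simp: not_less)
  have apos: "a m > 0" if "m \<ge> 1" for m
  proof -
    obtain n where n: "n \<ge> m" "\<forall>k\<in>{1..n}. \<epsilon> / real n \<le> a k ^ d" using H by blast
    have "\<epsilon> / real n > 0" using n that e by auto
    hence "a m ^ d > 0" using n that by force
    thus ?thesis using a0[of m] d0 by (cases "a m = 0") (auto simp: power_0_left)
  qed
  define b where "b n = Min (a ` {1..max 1 n})" for n
  have b_le: "b n \<le> a m" if "m \<in> {1..max 1 n}" for n m
    unfolding b_def using that by auto
  have b_pos: "b n > 0" for n
    unfolding b_def using apos by (subst Min_gr_iff) auto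
  have b_mono: "b n \<le> b m" if "1 \<le> m" "m \<le> n" for m n
    unfolding b_def using that by (intro Min_antimono image_mono) auto
  define \<psi> where "\<psi> n = b n / 2" for n
  have psi_mono: "\<psi> n \<le> \<psi> m" if "1 \<le> m" "m \<le> n" for m n
    unfolding \<psi>_def using b_mono[OF that] by simp
  have psi_pos: "\<psi> n > 0" for n unfolding \<psi>_def using b_pos[of n] by simp
  have nsum: "\<not> summable (\<lambda>n. \<psi> (Suc n) ^ d)"
  proof
    assume S: "summable (\<lambda>n. \<psi> (Suc n) ^ d)"
    define e' where "e' = \<epsilon> / 2 ^ (d+1)"
    have e': "e' > 0" unfolding e'_def using e by simp
    obtain N0 where N0: "\<forall>m\<ge>N0. \<forall>n. norm (sum (\<lambda>n. \<psi> (Suc n) ^ d) {m..<n}) < e'"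
      using S e' unfolding summable_Cauchy by blast
    obtain n where n: "n \<ge> 2*N0+2" "\<forall>k\<in>{1..n}. \<epsilon> / real n \<le> a k ^ d" using H by blast
    have n1: "n \<ge> 1" using n by simp
    obtain m0 where m0: "m0 \<in> {1..max 1 n}" "b n = a m0"
      unfolding b_def by (metis (no_types, lifting) Min_in atLeastAtMost_iff empty_iff finite_atLeastAtMost
          finite_imageI image_iff image_is_empty le_refl max.cobounded1)
    have bn: "\<epsilon> / real n \<le> b n ^ d" using m0 n n1 by auto
    have tm: "\<psi> (Suc k) ^ d \<ge> \<epsilon> / (real n * 2 ^ d)" if "k \<in> {n div 2..<n}" for k
    proof -
      have "\<psi> n \<le> \<psi> (Suc k)" using that by (intro psi_mono) auto
      hence "\<psi> n ^ d \<le> \<psi> (Suc k) ^ d" using psi_pos[of n] by (intro power_mono) auto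
      moreover have "\<psi> n ^ d = b n ^ d / 2 ^ d" unfolding \<psi>_def by (simp add: power_divide)
      moreover have "\<epsilon> / (real n * 2 ^ d) \<le> b n ^ d / 2 ^ d"
        using bn by (simp add: divide_right_mono field_simps)
      ultimately show ?thesis by linarith
    qed
    have cardge: "real (card {n div 2..<n}) \<ge> real n / 2" by auto
    have "(\<Sum>k\<in>{n div 2..<n}. \<epsilon> / (real n * 2 ^ d)) \<le> sum (\<lambda>k. \<psi> (Suc k) ^ d) {n div 2..<n}"
      using tm by (intro sum_mono) auto
    moreover have "(\<Sum>k\<in>{n div 2..<n}. \<epsilon> / (real n * 2 ^ d)) = real (card {n div 2..<n}) * (\<epsilon> / (real n * 2 ^ d))"
      by simp
    moreover have "real (card {n div 2..<n}) * (\<epsilon> / (real n * 2 ^ d)) \<ge> (real n / 2) * (\<epsilon> / (real n * 2 ^ d))"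
      using cardge e by (intro mult_right_mono) auto
    moreover have "(real n / 2) * (\<epsilon> / (real n * 2 ^ d)) = e'" unfolding e'_def using n1 by (simp add: field_simps)
    moreover have "norm (sum (\<lambda>n. \<psi> (Suc n) ^ d) {n div 2..<n}) < e'"
      using N0 n by auto
    moreover have "norm (sum (\<lambda>n. \<psi> (Suc n) ^ d) {n div 2..<n}) = sum (\<lambda>n. \<psi> (Suc n) ^ d) {n div 2..<n}"
      using psi_pos unfolding real_norm_def by (intro abs_of_nonneg sum_nonneg) (simp add: less_imp_le)
    ultimately show False by linarith
  qed
  have "\<psi> \<in> classD TYPE('n)"
    unfolding classD_def using psi_pos psi_mono nsum unfolding d_def by (auto simp: less_imp_le)
  hence "(x,y) \<in> W_set r \<psi>" using xy unfolding Pi_set_def by blast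
  hence "infinite {n::nat. n \<ge> 1 \<and> a n < \<psi> n}" unfolding W_set_def a_def by simp
  moreover have "{n::nat. n \<ge> 1 \<and> a n < \<psi> n} = {}"
  proof -
    have "\<psi> n < a n" if "n \<ge> 1" for n
      using b_le[of n n] b_pos[of n] that unfolding \<psi>_def by auto
    thus ?thesis by force
  qed
  ultimately show False by (metis finite.emptyI)
qed



lemma conv:
  fixes z :: "real ^ 'n"
  assumes "rnorm r z ^ CARD('n) < \<delta>" "0 < r$i"
  shows "dist_Z (z$i) < \<delta> powr (r$i)"
proof -
  define d where "d = CARD('n)"
  have d0: "d > 0" unfolding d_def by simp
  define M where "M = Max (range (\<lambda>i. comp_term (r $ i) (z $ i)))"
  have ct0: "comp_term a t \<ge> 0" for a t unfolding comp_term_def by simp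
  have Mge: "comp_term (r$i) (z$i) \<le> M" unfolding M_def by (rule Max_ge) auto
  have M0: "M \<ge> 0" using Mge ct0[of "r$i" "z$i"] by linarith
  have "rnorm r z ^ d = M"
  proof (cases "M = 0")
    case True thus ?thesis using d0 unfolding rnorm_def M_def[symmetric] d_def by simp
  next
    case False
    hence Mp: "M > 0" using M0 by simp
    have "rnorm r z ^ d = (M powr (1 / real d)) powr (real d)"
      unfolding rnorm_def M_def[symmetric] d_def using Mp by (simp add: powr_realpow)
    also have "\<dots> = M" using d0 M0 by (simp add: powr_powr)
    finally show ?thesis .
  qed
  hence Md: "M < \<delta>" using assms(1) unfolding d_def by simp
  hence ct: "dist_Z (z$i) powr (1 / r$i) < \<delta>" using Mge assms(2) unfolding comp_term_def by simp
  have dz0: "dist_Z (z$i) \<ge> 0" unfolding dist_Z_def by (rule infdist_nonneg)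
  have dpos: "\<delta> > 0" using Md M0 by simp
  show ?thesis
  proof (cases "dist_Z (z$i) = 0")
    case True thus ?thesis using dpos by simp
  next
    case False
    have "dist_Z (z$i) = (dist_Z (z$i) powr (1 / r$i)) powr (r$i)"
      using assms(2) False dz0 by (simp add: powr_powr)
    also have "\<dots> < \<delta> powr (r$i)" using ct assms(2) by (intro powr_less_mono2) auto
    finally show ?thesis .
  qed
qed

lemma distZ_near:
  assumes "dist_Z t \<le> \<rho>" "\<rho> > 0"
  shows "\<exists>j::int. \<bar>t - of_int j\<bar> < 2 * \<rho>"
proof (rule ccontr)
  assume "\<not> ?thesis"
  hence H: "\<forall>j::int. 2 * \<rho> \<le> \<bar>t - of_int j\<bar>" by (auto simp: not_less)
  have ne: "(\<int>::real set) \<noteq> {}" using Ints_0 by blast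
  have "2 * \<rho> \<le> infdist t \<int>"
    unfolding infdist_notempty[OF ne]
  proof (rule cINF_greatest)
    show "(\<int>::real set) \<noteq> {}" by (rule ne)
    fix a :: real assume "a \<in> \<int>"
    then obtain j where "a = of_int j" by (auto elim: Ints_cases)
    thus "2 * \<rho> \<le> dist t a" using H by (simp add: dist_real_def)
  qed
  thus False using assms unfolding dist_Z_def by simp
qed



lemma box_bound:
  fixes c :: "real^'n" and K :: nat
  assumes r: "r \<in> weights" and dl: "0 < \<delta>" "\<delta> \<le> 1"
  shows "\<exists>B\<in>sets lborel. {y. (\<forall>i. \<bar>y$i\<bar> \<le> real K) \<and> (\<forall>i. 0 < r$i \<longrightarrow> dist_Z (c$i + y$i) \<le> \<delta> powr (r$i))} \<subseteq> B
     \<and> emeasure lborel B \<le> ennreal ((2 * real K + 5) ^ CARD('n) * (4 * real K + 4) ^ CARD('n) * \<delta>)"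
proof -
  define d where "d = CARD('n)"
  define \<rho> where "\<rho> i = \<delta> powr (r$i)" for i
  have r0: "r$i \<ge> 0" for i using r unfolding weights_def by auto
  have rsum: "(\<Sum>i\<in>UNIV. r $ i) = 1" using r unfolding weights_def by auto
  have rho_pos: "\<rho> i > 0" for i unfolding \<rho>_def using dl by simp
  have rho_le: "\<rho> i \<le> 1" for i unfolding \<rho>_def using dl r0[of i] by (intro powr_le1) auto
  define Fi where "Fi i = (if 0 < r$i then {\<lceil>c$i\<rceil> - int K - 2 .. \<lfloor>c$i\<rfloor> + int K + 2} else {0::int})" for i
  define F where "F = Pi\<^sub>E UNIV Fi"
  have Ffin: "finite F" unfolding F_def Fi_def by (intro finite_PiE) auto
  define lo where "lo p = (\<chi> i. if 0 < r$i then of_int (p i) - c$i - 2 * \<rho> i else - real K)" for p :: "'n \<Rightarrow> int"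
  define hi where "hi p = (\<chi> i. if 0 < r$i then of_int (p i) - c$i + 2 * \<rho> i else real K)" for p :: "'n \<Rightarrow> int"
  define B where "B = (\<Union>p\<in>F. cbox (lo p) (hi p))"
  have Bsets: "B \<in> sets lborel" unfolding B_def using Ffin by (intro sets.finite_UN) auto
  have sub: "{y. (\<forall>i. \<bar>y$i\<bar> \<le> real K) \<and> (\<forall>i. 0 < r$i \<longrightarrow> dist_Z (c$i + y$i) \<le> \<delta> powr (r$i))} \<subseteq> B"
  proof
    fix y assume "y \<in> {y. (\<forall>i. \<bar>y$i\<bar> \<le> real K) \<and> (\<forall>i. 0 < r$i \<longrightarrow> dist_Z (c$i + y$i) \<le> \<delta> powr (r$i))}"
    hence yK: "\<And>i. \<bar>y$i\<bar> \<le> real K" and yd: "\<And>i. 0 < r$i \<Longrightarrow> dist_Z (c$i + y$i) \<le> \<rho> i"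
      unfolding \<rho>_def by auto
    define p where "p i = (if 0 < r$i then (SOME j::int. \<bar>c$i + y$i - of_int j\<bar> < 2 * \<rho> i) else 0)" for i
    have pj: "\<bar>c$i + y$i - of_int (p i)\<bar> < 2 * \<rho> i" if "0 < r$i" for i
    proof -
      have "\<exists>j::int. \<bar>c$i + y$i - of_int j\<bar> < 2 * \<rho> i" using distZ_near yd[OF that] rho_pos by blast
      thus ?thesis unfolding p_def using that by (simp add: someI_ex[where P="\<lambda>j. \<bar>c$i + y$i - of_int j\<bar> < 2 * \<rho> i"])
    qed
    have pF: "p \<in> F"
    proof -
      have "p i \<in> Fi i" for i
      proof (cases "0 < r$i")
        case True
        have a: "\<bar>c$i + y$i - of_int (p i)\<bar> < 2" using pj[OF True] rho_le[of i] by linarith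
        have "c$i \<le> of_int (p i + int K + 2)" using a yK[of i] by (simp; linarith)
        hence "\<lceil>c$i\<rceil> \<le> p i + int K + 2" by (simp add: ceiling_le_iff)
        moreover have "of_int (p i - int K - 2) \<le> c$i" using a yK[of i] by (simp; linarith)
        hence "p i - int K - 2 \<le> \<lfloor>c$i\<rfloor>" by (simp add: le_floor_iff)
        ultimately show ?thesis unfolding Fi_def using True by simp
      next
        case False thus ?thesis unfolding Fi_def p_def by simp
      qed
      thus ?thesis unfolding F_def by (simp add: PiE_iff)
    qed
    have "y \<in> cbox (lo p) (hi p)"
      unfolding mem_box_cart(2)
    proof
      fix i show "lo p $ i \<le> y $ i \<and> y $ i \<le> hi p $ i"
      proof (cases "0 < r$i")
        case True thus ?thesis unfolding lo_def hi_def using pj[OF True] by auto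
      next
        case False thus ?thesis unfolding lo_def hi_def using yK[of i] by auto
      qed
    qed
    thus "y \<in> B" unfolding B_def using pF by blast
  qed
  define X where "X = (4 * real K + 4) ^ d * \<delta>"
  have cont: "measure lborel (cbox (lo p) (hi p)) \<le> X" for p
  proof -
    have "(\<Prod>i\<in>UNIV. hi p $ i - lo p $ i) \<le> (\<Prod>i\<in>UNIV. (4 * real K + 4) * \<rho> i)"
    proof (rule prod_mono)
      fix i
      show "0 \<le> hi p $ i - lo p $ i \<and> hi p $ i - lo p $ i \<le> (4 * real K + 4) * \<rho> i"
      proof (cases "0 < r$i")
        case True thus ?thesis unfolding lo_def hi_def using rho_pos[of i] by (simp add: algebra_simps)
      next
        case False
        hence "r$i = 0" using r0[of i] by simp
        hence "\<rho> i = 1" unfolding \<rho>_def using dl by simp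
        thus ?thesis unfolding lo_def hi_def using False by simp
      qed
    qed
    also have "\<dots> = (4 * real K + 4) ^ d * (\<Prod>i\<in>UNIV. \<rho> i)"
      unfolding d_def by (simp add: prod.distrib)
    also have "(\<Prod>i\<in>UNIV. \<rho> i) = \<delta>"
      unfolding \<rho>_def using dl rsum powr_sum[of \<delta> "\<lambda>i. r$i" UNIV] by simp
    finally have P: "(\<Prod>i\<in>UNIV. hi p $ i - lo p $ i) \<le> X" unfolding X_def by simp
    have X0: "X \<ge> 0" unfolding X_def using dl by simp
    show ?thesis using P X0 by (simp add: content_cbox_if_cart)
  qed
  have cardF: "real (card F) \<le> (2 * real K + 5) ^ d"
  proof -
    have "card F = (\<Prod>i\<in>UNIV. card (Fi i))" unfolding F_def by (simp add: card_PiE)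
    also have "\<dots> \<le> (\<Prod>i\<in>(UNIV::'n set). 2 * K + 5)"
    proof (rule prod_mono)
      fix i :: 'n
      have "card (Fi i) \<le> 2 * K + 5"
      proof (cases "0 < r$i")
        case True
        have "\<lfloor>c$i\<rfloor> \<le> \<lceil>c$i\<rceil>" by (rule floor_le_ceiling)
        thus ?thesis unfolding Fi_def using True by (simp add: nat_le_iff)
      next
        case False thus ?thesis unfolding Fi_def by simp
      qed
      thus "0 \<le> card (Fi i) \<and> card (Fi i) \<le> 2 * K + 5" by simp
    qed
    also have "\<dots> = (2 * K + 5) ^ d" unfolding d_def by simp
    finally have "card F \<le> (2 * K + 5) ^ d" .
    hence "real (card F) \<le> real ((2 * K + 5) ^ d)" by linarith
    thus ?thesis by simp
  qed
  have "emeasure lborel B \<le> (\<Sum>p\<in>F. emeasure lborel (cbox (lo p) (hi p)))"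
    unfolding B_def using Ffin by (intro emeasure_subadditive_finite) auto
  also have "\<dots> \<le> (\<Sum>p\<in>F. ennreal X)"
  proof (rule sum_mono)
    fix p
    have "emeasure lborel (cbox (lo p) (hi p)) \<noteq> top" using emeasure_lborel_cbox_finite[of "lo p" "hi p"] by (simp add: less_top)
    hence "emeasure lborel (cbox (lo p) (hi p)) = ennreal (measure lborel (cbox (lo p) (hi p)))"
      by (simp add: emeasure_eq_ennreal_measure)
    thus "emeasure lborel (cbox (lo p) (hi p)) \<le> ennreal X" using cont[of p] by (simp add: ennreal_leI)
  qed
  also have "\<dots> = ennreal (real (card F) * X)"
    using X_def dl by (simp add: ennreal_mult' ennreal_of_nat_eq_real_of_nat)
  also have "\<dots> \<le> ennreal ((2 * real K + 5) ^ d * X)"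
    using cardF dl unfolding X_def by (intro ennreal_leI mult_right_mono) auto
  finally show ?thesis using Bsets sub unfolding X_def d_def by (auto simp: mult.assoc)
qed



definition Yh :: "real^'n \<Rightarrow> nat \<Rightarrow> nat \<Rightarrow> nat \<Rightarrow> ((real^'n) \<times> (real^'n)) set" where
  "Yh r K j n = {(x,y). (\<forall>i. \<bar>y$i\<bar> \<le> real K) \<and> (\<exists>m\<in>{1..n}. \<forall>i. 0 < r$i \<longrightarrow>
      dist_Z (real m * x$i + y$i) \<le> (1 / (real (Suc j) * real n)) powr (r$i))}"

definition Gs :: "real^'n \<Rightarrow> ((real^'n) \<times> (real^'n)) set" where
  "Gs r = {z. \<exists>K::nat. \<forall>j::nat. \<exists>N::nat. \<forall>n\<ge>N. z \<in> Yh r K j n}"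

lemma Yh_closed:
  fixes r :: "real^'n"
  shows "closed (Yh r K j n)"
proof -
  define c where "c i = (1 / (real (Suc j) * real n)) powr (r$i)" for i
  have eq: "Yh r K j n = (\<Inter>i. {z::((real^'n) \<times> (real^'n)). \<bar>snd z $ i\<bar> \<le> real K}) \<inter>
     (\<Union>m\<in>{1..n}. \<Inter>i. {z. 0<r$i \<longrightarrow> dist_Z (real m * fst z $ i + snd z $ i) \<le> c i})"
    unfolding Yh_def c_def by fastforce
  have c1: "closed {z::((real^'n) \<times> (real^'n)). \<bar>snd z $ i\<bar> \<le> real K}" for i
    by (intro closed_Collect_le continuous_intros)
  have c2: "closed {z::((real^'n) \<times> (real^'n)). 0<r$i \<longrightarrow> dist_Z (real m * fst z $ i + snd z $ i) \<le> c i}" for i m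
  proof (cases "0 < r$i")
    case True
    thus ?thesis unfolding dist_Z_def by simp (intro closed_Collect_le continuous_intros)
  next
    case False thus ?thesis by simp
  qed
  show ?thesis unfolding eq using c1 c2 by (intro closed_Int closed_INT closed_UN) auto
qed

lemma Yh_sets: "Yh r K j n \<in> sets borel"
  by (rule borel_closed[OF Yh_closed])

lemma Gs_sets:
  fixes r :: "real^'n"
  shows "Gs r \<in> sets borel"
proof -
  have eq: "Gs r = (\<Union>K. \<Inter>j. \<Union>N. \<Inter>n\<in>{N..}. Yh r K j n)" unfolding Gs_def by (rule set_eqI) (simp add: atLeast_iff; simp add: Ball_def)
  have "(\<Inter>n\<in>{N..}. Yh r K j n) \<in> sets borel" for K j N
    by (rule sets.countable_INT'') (auto simp: Yh_sets)
  hence "(\<Union>N. \<Inter>n\<in>{N..}. Yh r K j n) \<in> sets borel" for K j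
    by (intro sets.countable_UN'') auto
  hence "(\<Inter>j. \<Union>N. \<Inter>n\<in>{N..}. Yh r K j n) \<in> sets borel" for K
    by (intro sets.countable_INT'') auto
  hence "(\<Union>K. \<Inter>j. \<Union>N. \<Inter>n\<in>{N..}. Yh r K j n) \<in> sets borel"
    by (intro sets.countable_UN'') auto
  thus ?thesis unfolding eq .
qed



lemma Yh_sets_prod:
  fixes r :: "real^'n"
  shows "Yh r K j n \<in> sets (lborel \<Otimes>\<^sub>M (lborel :: (real^'n) measure))"
proof -
  have "sets (lborel \<Otimes>\<^sub>M (lborel :: (real^'n) measure)) = sets (lborel :: ((real^'n) \<times> (real^'n)) measure)"
    by (simp only: lborel_prod)
  thus ?thesis using Yh_sets[of r K j n] by simp
qed

lemma section_null:
  fixes r :: "real^'n" and x :: "real^'n"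
  assumes r: "r \<in> weights"
  shows "emeasure lborel (Pair x -` Gs r) = 0"
proof -
  define d where "d = CARD('n)"
  define C where "C K = (2 * real K + 5) ^ d * (4 * real K + 4) ^ d" for K :: nat
  have C0: "C K \<ge> 0" for K unfolding C_def by simp
  define S where "S K j n = Pair x -` Yh r K j n" for K j n
  have S_sets: "S K j n \<in> sets lborel" for K j n
    unfolding S_def by (rule sets_Pair1[OF Yh_sets_prod])
  have S_sets': "S K j n \<in> sets borel" for K j n using S_sets[of K j n] by simp
  have S_bound: "emeasure lborel (S K j n) \<le> ennreal (C K / real (Suc j))" if n1: "n \<ge> 1" for K j n
  proof -
    define \<delta> where "\<delta> = 1 / (real (Suc j) * real n)"
    have dp: "0 < \<delta>" unfolding \<delta>_def using n1 by simp
    have "1 \<le> real (Suc j) * real n" using n1 mult_mono[of 1 "real (Suc j)" 1 "real n"] by simp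
    hence d1: "\<delta> \<le> 1" unfolding \<delta>_def by simp
    have H: "\<forall>m::nat. \<exists>B\<in>sets lborel. {y. (\<forall>i. \<bar>y$i\<bar> \<le> real K) \<and> (\<forall>i. 0 < r$i \<longrightarrow> dist_Z ((real m *\<^sub>R x)$i + y$i) \<le> \<delta> powr (r$i))} \<subseteq> B
     \<and> emeasure lborel B \<le> ennreal (C K * \<delta>)"
      unfolding C_def d_def by (intro allI box_bound[OF r dp d1])
    hence "\<forall>m::nat. \<exists>B. B \<in> sets lborel \<and> ({y. (\<forall>i. \<bar>y$i\<bar> \<le> real K) \<and> (\<forall>i. 0 < r$i \<longrightarrow> dist_Z ((real m *\<^sub>R x)$i + y$i) \<le> \<delta> powr (r$i))} \<subseteq> B
     \<and> emeasure lborel B \<le> ennreal (C K * \<delta>))"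
      unfolding Bex_def .
    from choice[OF this] obtain Bf where Bf: "\<forall>m::nat. Bf m \<in> sets lborel \<and> {y. (\<forall>i. \<bar>y$i\<bar> \<le> real K) \<and> (\<forall>i. 0 < r$i \<longrightarrow> dist_Z ((real m *\<^sub>R x)$i + y$i) \<le> \<delta> powr (r$i))} \<subseteq> Bf m
     \<and> emeasure lborel (Bf m) \<le> ennreal (C K * \<delta>)" by blast
    have sub: "S K j n \<subseteq> (\<Union>m\<in>{1..n}. Bf m)"
    proof
      fix y assume "y \<in> S K j n"
      hence yK: "\<forall>i. \<bar>y$i\<bar> \<le> real K" and "\<exists>m\<in>{1..n}. \<forall>i. 0 < r$i \<longrightarrow> dist_Z (real m * x$i + y$i) \<le> \<delta> powr (r$i)"
        unfolding S_def Yh_def \<delta>_def by auto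
      then obtain m where m: "m \<in> {1..n}" "\<forall>i. 0 < r$i \<longrightarrow> dist_Z (real m * x$i + y$i) \<le> \<delta> powr (r$i)" by blast
      have "y \<in> {y. (\<forall>i. \<bar>y$i\<bar> \<le> real K) \<and> (\<forall>i. 0 < r$i \<longrightarrow> dist_Z ((real m *\<^sub>R x)$i + y$i) \<le> \<delta> powr (r$i))}"
        using yK m(2) by simp
      hence "y \<in> Bf m" using Bf by blast
      thus "y \<in> (\<Union>m\<in>{1..n}. Bf m)" using m by blast
    qed
    have "emeasure lborel (S K j n) \<le> emeasure lborel (\<Union>m\<in>{1..n}. Bf m)"
      using sub Bf by (intro emeasure_mono) auto
    also have "\<dots> \<le> (\<Sum>m\<in>{1..n}. emeasure lborel (Bf m))"
      using Bf by (intro emeasure_subadditive_finite) auto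
    also have "\<dots> \<le> (\<Sum>m\<in>{1..n}. ennreal (C K * \<delta>))"
      using Bf by (intro sum_mono) auto
    also have "\<dots> = ennreal (real n * (C K * \<delta>))"
      using C0 dp by (simp add: ennreal_mult' ennreal_of_nat_eq_real_of_nat)
    also have "real n * (C K * \<delta>) = C K / real (Suc j)"
    proof -
      have nz: "real n \<noteq> 0" using n1 by simp
      have "real n * (C K * \<delta>) = C K * (real n / (real (Suc j) * real n))" unfolding \<delta>_def by simp
      also have "real n / (real (Suc j) * real n) = 1 / real (Suc j)" using nz by simp
      finally show ?thesis by simp
    qed
    finally show ?thesis .
  qed
  define T where "T K j N = (\<Inter>n\<in>{Suc N..}. S K j n)" for K j N
  have T_sets: "T K j N \<in> sets lborel" for K j N
    unfolding T_def by (rule sets.countable_INT'') (auto simp: S_sets')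
  have T_sets': "T K j N \<in> sets borel" for K j N using T_sets[of K j N] by simp
  have T_bound: "emeasure lborel (T K j N) \<le> ennreal (C K / real (Suc j))" for K j N
  proof -
    have "T K j N \<subseteq> S K j (Suc N)" unfolding T_def by auto
    hence "emeasure lborel (T K j N) \<le> emeasure lborel (S K j (Suc N))"
      by (rule emeasure_mono[OF _ S_sets])
    also have "\<dots> \<le> ennreal (C K / real (Suc j))" by (rule S_bound) simp
    finally show ?thesis .
  qed
  have T_inc: "incseq (T K j)" for K j
    unfolding incseq_def T_def
  proof (intro allI impI subsetI INT_I)
    fix m n :: nat and y i assume a: "m \<le> n" "y \<in> (\<Inter>n\<in>{Suc m..}. S K j n)" "i \<in> {Suc n..}"
    hence "i \<in> {Suc m..}" by simp
    thus "y \<in> S K j i" using a(2) by blast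
  qed
  define V where "V K j = (\<Union>N. T K j N)" for K j
  have V_sets: "V K j \<in> sets lborel" for K j
    unfolding V_def using T_sets' by (intro sets.countable_UN'') auto
  have V_sets': "V K j \<in> sets borel" for K j using V_sets[of K j] by simp
  have V_bound: "emeasure lborel (V K j) \<le> ennreal (C K / real (Suc j))" for K j
  proof -
    have "emeasure lborel (V K j) = (SUP N. emeasure lborel (T K j N))"
      unfolding V_def by (rule SUP_emeasure_incseq[symmetric], use T_sets in blast, rule T_inc)
    also have "\<dots> \<le> ennreal (C K / real (Suc j))" by (rule SUP_least) (rule T_bound)
    finally show ?thesis .
  qed
  define W where "W K = (\<Inter>j. V K j)" for K
  have W_sets: "W K \<in> sets lborel" for K
    unfolding W_def using V_sets' by (intro sets.countable_INT'') auto
  have W_bound: "emeasure lborel (W K) \<le> ennreal (C K / real (Suc j))" for K j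
  proof -
    have "emeasure lborel (W K) \<le> emeasure lborel (V K j)"
      unfolding W_def by (rule emeasure_mono) (blast, rule V_sets)
    thus ?thesis using V_bound[of K j] by simp
  qed
  have W_null: "W K \<in> null_sets lborel" for K
  proof -
    have "emeasure lborel (W K) \<le> ennreal (C K)" using W_bound[of K 0] by simp
    hence fin: "emeasure lborel (W K) \<noteq> top" by (auto simp: top_unique)
    define w where "w = measure lborel (W K)"
    have ew: "emeasure lborel (W K) = ennreal w" unfolding w_def using fin by (simp add: emeasure_eq_ennreal_measure)
    have w0: "w \<ge> 0" unfolding w_def by simp
    have wle: "w \<le> C K / real (Suc j)" for j
      using W_bound[of K j] C0[of K] unfolding ew by (simp add: ennreal_le_iff)
    have "w = 0"
    proof (rule ccontr)
      assume "w \<noteq> 0"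
      hence wp: "w > 0" using w0 by simp
      obtain j :: nat where j: "C K / w < real j" using reals_Archimedean2 by blast
      hence "C K < w * real j" using wp by (simp add: field_simps)
      also have "\<dots> \<le> w * real (Suc j)" using wp by simp
      finally have "C K / real (Suc j) < w" by (simp add: field_simps)
      thus False using wle[of j] by simp
    qed
    thus ?thesis by (intro null_setsI[OF _ W_sets]) (simp add: ew)
  qed
  have sub: "Pair x -` Gs r \<subseteq> (\<Union>K. W K)"
  proof
    fix y assume "y \<in> Pair x -` Gs r"
    then obtain K where K: "\<forall>j. \<exists>N. \<forall>n\<ge>N. (x,y) \<in> Yh r K j n" unfolding Gs_def by auto
    have "y \<in> V K j" for j
    proof -
      obtain N where "\<forall>n\<ge>N. (x,y) \<in> Yh r K j n" using K by blast
      hence "y \<in> T K j N" unfolding T_def S_def by auto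
      thus ?thesis unfolding V_def by blast
    qed
    hence "y \<in> W K" unfolding W_def by blast
    thus "y \<in> (\<Union>K. W K)" by blast
  qed
  have N: "(\<Union>K. W K) \<in> null_sets lborel" using W_null by (rule null_sets_UN)
  hence "emeasure lborel (\<Union>K. W K) = 0" by (rule null_setsD1)
  moreover have "emeasure lborel (Pair x -` Gs r) \<le> emeasure lborel (\<Union>K. W K)"
    by (rule emeasure_mono[OF sub null_setsD2[OF N]])
  ultimately show ?thesis by simp
qed



lemma Gs_null:
  fixes r :: "real^'n"
  assumes r: "r \<in> weights"
  shows "Gs r \<in> null_sets (lborel :: ((real^'n) \<times> (real^'n)) measure)"
proof -
  have eqs: "sets (lborel \<Otimes>\<^sub>M (lborel :: (real^'n) measure)) = sets (lborel :: ((real^'n) \<times> (real^'n)) measure)"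
    by (simp only: lborel_prod)
  have G1: "Gs r \<in> sets (lborel :: ((real^'n) \<times> (real^'n)) measure)" using Gs_sets[of r] by simp
  have A: "Gs r \<in> sets (lborel \<Otimes>\<^sub>M (lborel :: (real^'n) measure))" using G1 eqs by simp
  have "emeasure (lborel \<Otimes>\<^sub>M (lborel :: (real^'n) measure)) (Gs r) = (\<integral>\<^sup>+ x. emeasure lborel (Pair x -` Gs r) \<partial>lborel)"
    by (rule lborel.emeasure_pair_measure_alt[OF A])
  also have "\<dots> = (\<integral>\<^sup>+ x. (0::ennreal) \<partial>(lborel :: (real^'n) measure))" using section_null[OF r] by simp
  also have "\<dots> = 0" by simp
  finally have "emeasure (lborel :: ((real^'n) \<times> (real^'n)) measure) (Gs r) = 0" by (simp only: lborel_prod)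
  thus ?thesis using G1 by (intro null_setsI)
qed

lemma Pi_sub:
  fixes r :: "real^'n"
  shows "Pi_set r \<subseteq> Gs r"
proof
  fix z assume z: "z \<in> Pi_set r"
  obtain x y where zxy: "z = (x,y)" by (cases z)
  have xy: "(x,y) \<in> Pi_set r" using z zxy by simp
  obtain K :: nat where K: "norm y \<le> real K" using real_arch_simple by blast
  have yK: "\<forall>i. \<bar>y$i\<bar> \<le> real K" using K component_le_norm_cart order_trans by blast
  have "\<forall>j. \<exists>N. \<forall>n\<ge>N. (x,y) \<in> Yh r K j n"
  proof
    fix j :: nat
    have ep: "1 / real (Suc j) > 0" by simp
    obtain N where N: "\<forall>n\<ge>N. \<exists>m\<in>{1..n}. rnorm r (real m *\<^sub>R x + y) ^ CARD('n) < (1 / real (Suc j)) / real n"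
      using step1[OF xy ep] by blast
    have "\<forall>n\<ge>N. (x,y) \<in> Yh r K j n"
    proof (intro allI impI)
      fix n assume "n \<ge> N"
      then obtain m where m: "m \<in> {1..n}" "rnorm r (real m *\<^sub>R x + y) ^ CARD('n) < (1 / real (Suc j)) / real n"
        using N by blast
      have eq: "(1 / real (Suc j)) / real n = 1 / (real (Suc j) * real n)" by simp
      have "dist_Z (real m * x$i + y$i) \<le> (1 / (real (Suc j) * real n)) powr (r$i)" if "0 < r$i" for i
        using conv[OF m(2)[unfolded eq] that] by simp
      thus "(x,y) \<in> Yh r K j n" unfolding Yh_def using yK m(1) by blast
    qed
    thus "\<exists>N. \<forall>n\<ge>N. (x,y) \<in> Yh r K j n" by blast
  qed
  thus "z \<in> Gs r" unfolding Gs_def zxy by blast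
qed

theorem theorem15:
  fixes r :: "real ^ 'n"
  assumes "r \<in> weights"
  shows "Pi_set r \<in> sets lebesgue \<and> emeasure lebesgue (Pi_set r) = 0
    \<and> (\<forall>x. Phi_set r x \<in> sets lebesgue \<and> emeasure lebesgue (Phi_set r x) = 0)"
proof -
  have GN: "Gs r \<in> null_sets (lebesgue :: ((real^'n) \<times> (real^'n)) measure)"
    by (rule null_sets_completionI[OF Gs_null[OF assms]])
  have PN: "Pi_set r \<in> null_sets lebesgue"
    by (rule null_sets_completion_subset[OF Pi_sub GN])
  have PhiN: "Phi_set r x \<in> null_sets lebesgue" for x
  proof -
    have S: "Pair x -` Gs r \<in> null_sets (lborel :: (real^'n) measure)"
    proof (rule null_setsI)
      show "emeasure lborel (Pair x -` Gs r) = 0" by (rule section_null[OF assms])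
      have "Gs r \<in> sets (lborel \<Otimes>\<^sub>M (lborel :: (real^'n) measure))"
      proof -
        have eqs: "sets (lborel \<Otimes>\<^sub>M (lborel :: (real^'n) measure)) = sets (lborel :: ((real^'n) \<times> (real^'n)) measure)"
          by (simp only: lborel_prod)
        thus ?thesis using Gs_sets[of r] by simp
      qed
      thus "Pair x -` Gs r \<in> sets lborel" by (rule sets_Pair1)
    qed
    have "Phi_set r x \<subseteq> Pair x -` Gs r" using Pi_sub unfolding Phi_set_def by auto
    thus ?thesis by (rule null_sets_completion_subset[OF _ null_sets_completionI[OF S]])
  qed
  show ?thesis using PN PhiN by auto
qed


end
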